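(* Let $\mathbb{A}$ be a countable homogeneous structure, $\mathbb{F}$ a field, $d\ge1$, and $\mathscr{B}$ a family of finite substructures of $\mathbb{A}$ such that every finite substructure of $\mathbb{A}$ is a substructure of some $\mathbb{B}\in\mathscr{B}$. Then the length of $\operatorname{Lin}_{\mathbb{F}}\mathbb{A}^d$ (with respect to $\operatorname{Aut}(\mathbb{A})$) is at most $\sup_{\mathbb{B}\in\mathscr{B}}$ of the length of $\operatorname{Lin}_{\mathbb{F}}\mathbb{B}^d$ (with respect to $\operatorname{Aut}(\mathbb{B})$).
   Context: Homogeneous: every isomorphism between finite substructures extends to an automorphism. For a group $G$ acting on a set $X$, $\operatorname{Lin}_{\mathbb{F}}X$ is the space of finite formal linear combinations of elements of $X$ with the induced linear $G$-action; the length of $\operatorname{Lin}_{\mathbb{F}}X$ with respect to $G$ is the supremum of $n$ such that there is a chain $V_0\subsetneq\dots\subsetneq V_n$ of $G$-invariant subspaces. Here $G=\operatorname{Aut}(\mathbb{A})$ acts on $\mathbb{A}^d$ and $\operatorname{Aut}(\mathbb{B})$ on $\mathbb{B}^d$ componentwise. *)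

theory Defs
  imports Main "HOL-Library.Extended_Nat" "HOL-Library.Countable_Set"
begin

text \<open>Relational structures: a domain S :: 'a set together with an interpretation
  rel :: 'r \<Rightarrow> 'a list \<Rightarrow> bool of the relation symbols (a tuple is a list).
  The induced substructure on a subset C of S carries the same rel restricted to
  tuples from C.\<close>

definition iso_sub :: "('r \<Rightarrow> 'a list \<Rightarrow> bool) \<Rightarrow> 'a set \<Rightarrow> 'a set \<Rightarrow> ('a \<Rightarrow> 'a) \<Rightarrow> bool" where
  "iso_sub rel C D f \<longleftrightarrow> bij_betw f C D \<and>
     (\<forall>R xs. set xs \<subseteq> C \<longrightarrow> (rel R (map f xs) \<longleftrightarrow> rel R xs))"

definition aut :: "'a set \<Rightarrow> ('r \<Rightarrow> 'a list \<Rightarrow> bool) \<Rightarrow> ('a \<Rightarrow> 'a) set" where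
  "aut S rel = {g. iso_sub rel S S g}"

definition homogeneous :: "'a set \<Rightarrow> ('r \<Rightarrow> 'a list \<Rightarrow> bool) \<Rightarrow> bool" where
  "homogeneous S rel \<longleftrightarrow>
     (\<forall>C D f. finite C \<and> C \<subseteq> S \<and> D \<subseteq> S \<and> iso_sub rel C D f \<longrightarrow>
        (\<exists>g\<in>aut S rel. \<forall>x\<in>C. g x = f x))"

definition tuples :: "nat \<Rightarrow> 'a set \<Rightarrow> 'a list set" where
  "tuples d S = {xs. length xs = d \<and> set xs \<subseteq> S}"

text \<open>Lin_F X: finitely supported functions X \<rightarrow> F (formal finite linear combinations).\<close>
definition lin :: "'x set \<Rightarrow> ('x \<Rightarrow> 'k::field) set" where
  "lin X = {v. finite {x. v x \<noteq> 0} \<and> (\<forall>x. x \<notin> X \<longrightarrow> v x = 0)}"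

text \<open>G-invariant subspaces of Lin_F X, G a group of permutations of X
  (acting on coefficient functions by precomposition).\<close>
definition inv_subspace :: "'x set \<Rightarrow> ('x \<Rightarrow> 'x) set \<Rightarrow> ('x \<Rightarrow> 'k::field) set \<Rightarrow> bool" where
  "inv_subspace X G W \<longleftrightarrow> W \<subseteq> lin X \<and> (\<lambda>x. 0) \<in> W \<and>
     (\<forall>v\<in>W. \<forall>w\<in>W. (\<lambda>x. v x + w x) \<in> W) \<and>
     (\<forall>c. \<forall>v\<in>W. (\<lambda>x. c * v x) \<in> W) \<and>
     (\<forall>g\<in>G. \<forall>v\<in>W. (\<lambda>x. if x \<in> X then v (g x) else 0) \<in> W)"

definition lin_length :: "'k::field itself \<Rightarrow> 'x set \<Rightarrow> ('x \<Rightarrow> 'x) set \<Rightarrow> enat" where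
  "lin_length TYPE('k) X G = Sup {enat n | n. \<exists>V :: nat \<Rightarrow> ('x \<Rightarrow> 'k) set.
      (\<forall>i\<le>n. inv_subspace X G (V i)) \<and> (\<forall>i<n. V i \<subset> V (Suc i))}"

definition struct_lin_length :: "'k::field itself \<Rightarrow> nat \<Rightarrow> 'a set \<Rightarrow> ('r \<Rightarrow> 'a list \<Rightarrow> bool) \<Rightarrow> enat" where
  "struct_lin_length K d S rel = lin_length K (tuples d S) (map ` aut S rel)"

end

theory Submission
  imports Defs
begin

lemma finite_tuples: "finite B \<Longrightarrow> finite (tuples d B)"
  unfolding tuples_def using finite_lists_length_eq[of B d] by (simp add: conj_commute)

lemma restrict_inv:
  fixes V :: "('a list \<Rightarrow> 'k::field) set"
  assumes V: "inv_subspace (tuples d A) (map ` aut A rel) V"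
    and hom: "homogeneous A rel" and fB: "finite B" and BA: "B \<subseteq> A"
  shows "inv_subspace (tuples d B) (map ` aut B rel) (V \<inter> lin (tuples d B))"
proof -
  have TBA: "tuples d B \<subseteq> tuples d A" using BA unfolding tuples_def by auto
  have act: "(\<lambda>x. if x \<in> tuples d B then v (map h x) else 0) \<in> V \<inter> lin (tuples d B)"
    if h: "h \<in> aut B rel" and v: "v \<in> V" "v \<in> lin (tuples d B)" for h v
  proof -
    have hiso: "iso_sub rel B B h" using h by (simp add: aut_def)
    then obtain g where g: "g \<in> aut A rel" and gh: "\<forall>x\<in>B. g x = h x"
      using hom fB BA unfolding homogeneous_def by blast
    have gb: "bij_betw g A A" using g by (simp add: aut_def iso_sub_def)
    have hb: "bij_betw h B B" using hiso by (simp add: iso_sub_def)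
    have gB: "g ` B = B" using gh hb by (simp add: bij_betw_def image_def)
    have eq: "(\<lambda>x. if x \<in> tuples d B then v (map h x) else 0)
        = (\<lambda>x. if x \<in> tuples d A then v (map g x) else 0)"
    proof
      fix x
      show "(if x \<in> tuples d B then v (map h x) else 0) = (if x \<in> tuples d A then v (map g x) else 0)"
      proof (cases "x \<in> tuples d B")
        case True
        then have "map h x = map g x" using gh unfolding tuples_def by (auto intro!: map_cong)
        moreover have "x \<in> tuples d A" using True TBA by blast
        ultimately show ?thesis using True by metis
      next
        case False
        show ?thesis
        proof (cases "x \<in> tuples d A")
          case True
          then obtain y where y: "y \<in> set x" "y \<notin> B" "y \<in> A" using False unfolding tuples_def by auto
          have "g y \<notin> B"
          proof
            assume "g y \<in> B"
            then obtain z where z: "z \<in> B" "g z = g y" using gB by (metis imageE)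
            then have "z = y" using gb y BA unfolding bij_betw_def inj_on_def by blast
            then show False using z y by simp
          qed
          then have "map g x \<notin> tuples d B" using y unfolding tuples_def by auto
          then have "v (map g x) = 0" using v(2) unfolding lin_def by auto
          then show ?thesis using False True by simp
        next
          case False2: False
          then show ?thesis using False by simp
        qed
      qed
    qed
    have inV: "(\<lambda>x. if x \<in> tuples d A then v (map g x) else 0) \<in> V"
      using V g v(1) unfolding inv_subspace_def by blast
    have "finite {x. (if x \<in> tuples d B then v (map h x) else 0) \<noteq> 0}"
      by (rule finite_subset[OF _ finite_tuples[OF fB]]) auto
    then have "(\<lambda>x. if x \<in> tuples d B then v (map h x) else 0) \<in> lin (tuples d B)"
      unfolding lin_def by auto
    then show ?thesis using inV eq by simp
  qed
  have lin_add: "(\<lambda>x. v x + w x) \<in> lin X" if "v \<in> lin X" "w \<in> lin X" for v w :: "'a list \<Rightarrow> 'k" and X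
  proof -
    have "{x. v x + w x \<noteq> 0} \<subseteq> {x. v x \<noteq> 0} \<union> {x. w x \<noteq> 0}" by auto
    then show ?thesis using that unfolding lin_def by (auto intro: finite_subset)
  qed
  have lin_sc: "(\<lambda>x. c * v x) \<in> lin X" if "v \<in> lin X" for v :: "'a list \<Rightarrow> 'k" and X c
  proof -
    have "{x. c * v x \<noteq> 0} \<subseteq> {x. v x \<noteq> 0}" by auto
    then show ?thesis using that unfolding lin_def by (auto intro: finite_subset)
  qed
  show ?thesis
    unfolding inv_subspace_def
    using V act lin_add lin_sc unfolding inv_subspace_def
    by (auto simp: lin_def)
qed

theorem mainTheorem5:
  fixes A :: "'a set" and rel :: "'r \<Rightarrow> 'a list \<Rightarrow> bool" and d :: nat
    and \<B> :: "'a set set"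
  assumes "countable A"
    and "homogeneous A rel"
    and "d \<ge> 1"
    and "\<forall>B\<in>\<B>. finite B \<and> B \<subseteq> A"
    and "\<forall>C. finite C \<and> C \<subseteq> A \<longrightarrow> (\<exists>B\<in>\<B>. C \<subseteq> B)"
  shows "struct_lin_length TYPE('k::field) d A rel
           \<le> (SUP B\<in>\<B>. struct_lin_length TYPE('k) d B rel)"
  unfolding struct_lin_length_def lin_length_def[of "tuples d A"]
proof (rule Sup_least, clarify)
  fix n and V :: "nat \<Rightarrow> ('a list \<Rightarrow> 'k) set"
  assume Vi: "\<forall>i\<le>n. inv_subspace (tuples d A) (map ` aut A rel) (V i)"
    and Vs: "\<forall>i<n. V i \<subset> V (Suc i)"
  have "\<forall>i<n. \<exists>w. w \<in> V (Suc i) \<and> w \<notin> V i" using Vs by blast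
  then obtain w where w: "\<And>i. i < n \<Longrightarrow> w i \<in> V (Suc i) \<and> w i \<notin> V i" by metis
  define C where "C = (\<Union>i<n. \<Union>x\<in>{x. w i x \<noteq> 0}. set x)"
  have wl: "w i \<in> lin (tuples d A)" if "i < n" for i
  proof -
    have "V (Suc i) \<subseteq> lin (tuples d A)" using Vi that unfolding inv_subspace_def by simp
    then show ?thesis using w[OF that] by blast
  qed
  have fC: "finite C" unfolding C_def using wl unfolding lin_def by auto
  have CA: "C \<subseteq> A" unfolding C_def using wl unfolding lin_def tuples_def by fastforce
  obtain B where B: "B \<in> \<B>" "C \<subseteq> B" using assms(5) fC CA by blast
  have fB: "finite B" and BA: "B \<subseteq> A" using assms(4) B by auto
  define W where "W i = V i \<inter> lin (tuples d B)" for i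
  have Wi: "\<forall>i\<le>n. inv_subspace (tuples d B) (map ` aut B rel) (W i)"
    unfolding W_def using Vi restrict_inv[OF _ assms(2) fB BA] by blast
  have wB: "w i \<in> lin (tuples d B)" if "i < n" for i
  proof -
    have "w i x = 0" if "x \<notin> tuples d B" for x
    proof (rule ccontr)
      assume nz: "w i x \<noteq> 0"
      then have "x \<in> tuples d A" using wl[OF \<open>i < n\<close>] unfolding lin_def by auto
      moreover have "set x \<subseteq> B" using nz \<open>i < n\<close> B(2) unfolding C_def by blast
      ultimately show False using that unfolding tuples_def by auto
    qed
    then show ?thesis using wl[OF that] unfolding lin_def by auto
  qed
  have Ws: "\<forall>i<n. W i \<subset> W (Suc i)"
    using Vs w wB unfolding W_def by blast
  have "enat n \<le> lin_length TYPE('k) (tuples d B) (map ` aut B rel)"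
    unfolding lin_length_def using Wi Ws by (intro Sup_upper) blast
  then show "enat n \<le> (SUP B\<in>\<B>. lin_length TYPE('k) (tuples d B) (map ` aut B rel))"
    using B(1) by (auto intro: SUP_upper2)
qed

end
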